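(* Fix a positive integer $p$. For $n=pf$ let $A_{f\text{-APD},\mathrm{MU},2,n}$ denote the maximum size of a binary code $\mathcal{C}\subseteq\{0,1\}^n$ that is both MU and $f$-APD. Then there exists a constant $c_3>0$ (depending only on $p$) such that for all sufficiently large even $f$, with $n=pf$, \[ c_3\frac{2^n}{n}\le A_{f\text{-APD},\mathrm{MU},2,n}\le\frac{2^n}{n}. \]
   Context: For $\mathbf{a}=(a_1,\dots,a_n)$ write $\mathbf{a}_i^j=(a_i,\dots,a_j)$ if $i\le j$ and $(a_i,a_{i-1},\dots,a_j)$ if $i>j$; $\bar{\mathbf{a}}$ is the bitwise complement. A code $\mathcal{C}\subseteq\{0,1\}^n$ is MU if for all not necessarily distinct $\mathbf{a},\mathbf{b}\in\mathcal{C}$ and all $1\le l<n$, $\mathbf{a}_1^l\ne\mathbf{b}_{n-l+1}^n$. It is $f$-APD if for all not necessarily distinct $\mathbf{a},\mathbf{b}\in\mathcal{C}$ and all $1\le i,j\le n+1-f$, $\bar{\mathbf{a}}_i^{f+i-1}\ne\mathbf{b}_j^{f+j-1}$ and $\bar{\mathbf{a}}_i^{f+i-1}\ne\mathbf{b}_{f+j-1}^{j}$. *)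

theory Defs
  imports Complex_Main
begin

text \<open>Binary words of length n are boolean lists of length n; position k (1-indexed)
  of a word a is a ! (k-1).\<close>

definition words :: "nat \<Rightarrow> bool list set" where
  "words n = {xs. length xs = n}"

text \<open>The substring a_i^{i+f-1} (1-indexed, length f, starting at position i).\<close>
definition subw :: "bool list \<Rightarrow> nat \<Rightarrow> nat \<Rightarrow> bool list" where
  "subw a i f = take f (drop (i - 1) a)"

definition compl_w :: "bool list \<Rightarrow> bool list" where
  "compl_w a = map Not a"

definition MU :: "nat \<Rightarrow> bool list set \<Rightarrow> bool" where
  "MU n C \<longleftrightarrow> (\<forall>a\<in>C. \<forall>b\<in>C. \<forall>l. 1 \<le> l \<and> l < n \<longrightarrow> take l a \<noteq> drop (n - l) b)"

definition APD :: "nat \<Rightarrow> nat \<Rightarrow> bool list set \<Rightarrow> bool" where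
  "APD f n C \<longleftrightarrow> (\<forall>a\<in>C. \<forall>b\<in>C. \<forall>i j. 1 \<le> i \<and> i \<le> n + 1 - f \<and> 1 \<le> j \<and> j \<le> n + 1 - f \<longrightarrow>
      compl_w (subw a i f) \<noteq> subw b j f \<and> compl_w (subw a i f) \<noteq> rev (subw b j f))"

definition A_APD_MU :: "nat \<Rightarrow> nat \<Rightarrow> nat" where
  "A_APD_MU f n = Max {card C | C. C \<subseteq> words n \<and> MU n C \<and> APD f n C}"

end

theory Submission
  imports Defs "HOL-Library.Sublist"
begin


lemma card_words: "card (words n) = 2 ^ n"
proof -
  have "words n = {xs. set xs \<subseteq> (UNIV::bool set) \<and> length xs = n}" by (auto simp: words_def)
  then show ?thesis using card_lists_length_eq[of "UNIV::bool set" n] by simp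
qed

lemma finite_words: "finite (words n)"
proof -
  have "words n = {xs. set xs \<subseteq> (UNIV::bool set) \<and> length xs = n}" by (auto simp: words_def)
  then show ?thesis using finite_lists_length_eq[of "UNIV::bool set" n] by simp
qed

lemma union_bound:
  fixes q :: "bool list"
  shows "card {w \<in> words N. sublist q w} * 2 ^ length q \<le> (N + 1) * 2 ^ N"
proof (cases "length q \<le> N")
  case False
  then have "{w \<in> words N. sublist q w} = {}"
    by (auto simp: words_def dest: sublist_length_le)
  then show ?thesis by (simp only: card.empty)
next
  case True
  define m where "m = length q"
  have sub: "{w \<in> words N. sublist q w} \<subseteq>
      (\<Union>s\<in>{..N - m}. (\<lambda>(a,b). a @ q @ b) ` (words s \<times> words (N - m - s)))"
  proof
    fix w assume "w \<in> {w \<in> words N. sublist q w}"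
    then obtain a b where w: "w = a @ q @ b" and l: "length w = N"
      by (auto simp: words_def sublist_def)
    then have "length a \<le> N - m" "length b = N - m - length a" by (auto simp: m_def)
    then show "w \<in> (\<Union>s\<in>{..N - m}. (\<lambda>(a,b). a @ q @ b) ` (words s \<times> words (N - m - s)))"
      using w by (auto simp: words_def intro!: bexI[of _ "length a"] image_eqI[of _ _ "(a,b)"])
  qed
  have "card {w \<in> words N. sublist q w} \<le>
      (\<Sum>s\<in>{..N - m}. card ((\<lambda>(a,b). a @ q @ b) ` (words s \<times> words (N - m - s))))"
    by (rule order.trans[OF card_mono[OF _ sub] card_UN_le])
       (auto intro!: finite_imageI finite_cartesian_product finite_words)
  also have "\<dots> \<le> (\<Sum>s\<in>{..N - m}. 2 ^ (N - m))"
  proof (rule sum_mono)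
    fix s assume s: "s \<in> {..N - m}"
    have "card ((\<lambda>(a,b). a @ q @ b) ` (words s \<times> words (N - m - s))) \<le> card (words s \<times> words (N - m - s))"
      by (rule card_image_le) (auto intro!: finite_cartesian_product finite_words)
    also have "\<dots> = 2 ^ s * 2 ^ (N - m - s)" by (simp add: card_cartesian_product card_words)
    also have "\<dots> = 2 ^ (N - m)" using s by (simp flip: power_add)
    finally show "card ((\<lambda>(a,b). a @ q @ b) ` (words s \<times> words (N - m - s))) \<le> 2 ^ (N - m)" .
  qed
  also have "\<dots> = (N - m + 1) * 2 ^ (N - m)" by simp
  finally have "card {w \<in> words N. sublist q w} * 2 ^ m \<le> (N - m + 1) * 2 ^ (N - m) * 2 ^ m"
    by simp
  also have "\<dots> = (N - m + 1) * (2 ^ (N - m) * 2 ^ m)" by (simp only: mult.assoc)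
  also have "\<dots> = (N - m + 1) * 2 ^ N" using True by (simp add: m_def flip: power_add)
  also have "\<dots> \<le> (N + 1) * 2 ^ N" by simp
  finally show ?thesis by (simp add: m_def)
qed

lemma noR_split:
  assumes "\<forall>x\<in>set R. x" and "\<not> sublist R a" and "\<not> sublist R b"
  shows "\<not> sublist R (a @ False # b)"
proof
  assume "sublist R (a @ False # b)"
  then consider "sublist R a" | "sublist R (False # b)"
    | R1 R2 where "R = R1 @ R2" "suffix R1 a" "prefix R2 (False # b)"
    unfolding sublist_append by blast
  then show False
  proof cases
    case 1 then show ?thesis using assms by simp
  next
    case 2
    then have "prefix R (False # b) \<or> sublist R b" by (simp add: sublist_Cons_right)
    then show ?thesis using assms(1,3)
      by (cases R) (auto simp: prefix_def)
  next
    case 3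
    then show ?thesis using assms(1,2)
      by (cases R2) (auto simp: prefix_def dest: suffix_imp_sublist)
  qed
qed



definition Gs :: "nat \<Rightarrow> nat \<Rightarrow> bool list set" where
  "Gs k L = {x \<in> words L. last x = False \<and> \<not> sublist (replicate k True) x \<and> sublist (replicate (Suc k) False) x}"

definition Us :: "nat \<Rightarrow> nat \<Rightarrow> bool list set" where
  "Us k i = {u \<in> words i. \<not> sublist (True # replicate (Suc k) False) (False # u @ [False]) \<and> \<not> sublist (replicate k True) u}"

definition Vs :: "nat \<Rightarrow> nat \<Rightarrow> bool list set" where
  "Vs k j = {v \<in> words j. \<not> sublist (replicate k True) v}"

definition blk :: "nat \<Rightarrow> bool list \<Rightarrow> bool list \<Rightarrow> bool list" where
  "blk k u v = False # u @ False # True # replicate (Suc k) False @ v @ [False]"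

lemma cancel4: "(x::nat) * 2 ^ (k + 2) \<le> y * 2 ^ (i + 2) \<Longrightarrow> x * 2 ^ k \<le> y * 2 ^ i"
proof -
  assume "x * 2 ^ (k + 2) \<le> y * 2 ^ (i + 2)"
  then have "(x * 2 ^ k) * 4 \<le> (y * 2 ^ i) * 4" by (simp add: power_add mult.assoc)
  then show ?thesis by linarith
qed

lemma card_B1:
  "card {u \<in> words i. sublist (True # replicate (Suc k) False) (False # u @ [False])} * 2 ^ k \<le> (i + 3) * 2 ^ i"
proof -
  let ?P = "True # replicate (Suc k) False"
  let ?f = "\<lambda>u. False # u @ [False]"
  have a: "card {u \<in> words i. sublist ?P (?f u)} \<le> card {w \<in> words (i+2). sublist ?P w}"
    by (rule card_inj_on_le[of ?f]) (auto simp: inj_on_def words_def intro: finite_subset[OF _ finite_words])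
  have e: "length ?P = k + 2" by simp
  have b: "card {w \<in> words (i+2). sublist ?P w} * 2 ^ (k+2) \<le> (i + 2 + 1) * 2 ^ (i + 2)"
    using union_bound[of "i+2" ?P] unfolding e .
  have "card {u \<in> words i. sublist ?P (?f u)} * 2 ^ (k+2) \<le> (i + 2 + 1) * 2 ^ (i + 2)"
    using a b by (meson le_trans mult_le_mono1)
  from cancel4[OF this] show ?thesis by (simp add: algebra_simps)
qed

lemma card_B2:
  "card {u \<in> words i. sublist (replicate k True) u} * 2 ^ k \<le> (i + 1) * 2 ^ i"
  using union_bound[of i "replicate k True"] by simp

lemma U_bound:
  assumes "8 * (i + 2) \<le> 2 ^ k"
  shows "3 * 2 ^ i \<le> 4 * card (Us k i)"
proof -
  define B1 where "B1 = {u \<in> words i. sublist (True # replicate (Suc k) False) (False # u @ [False])}"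
  define B2 where "B2 = {u \<in> words i. sublist (replicate k True) u}"
  have U: "Us k i = words i - (B1 \<union> B2)" by (auto simp: Us_def B1_def B2_def)
  have fin: "finite (B1 \<union> B2)" by (auto simp: B1_def B2_def intro: finite_subset[OF _ finite_words])
  have c: "card (B1 \<union> B2) \<le> card B1 + card B2" by (rule card_Un_le)
  have "(card B1 + card B2) * 2 ^ k \<le> (2 * i + 4) * 2 ^ i"
    using card_B1[of i k] card_B2[of i k] by (simp add: B1_def B2_def algebra_simps)
  then have "4 * ((card B1 + card B2) * 2 ^ k) \<le> 4 * ((2 * i + 4) * 2 ^ i)" by (rule mult_le_mono2)
  then have "4 * (card B1 + card B2) * 2 ^ k \<le> (8 * (i + 2)) * 2 ^ i" by (simp add: algebra_simps)
  also have "\<dots> \<le> 2 ^ k * 2 ^ i" using assms by simp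
  finally have "4 * (card B1 + card B2) \<le> 2 ^ i" by simp
  moreover have "card (words i) - card (B1 \<union> B2) \<le> card (Us k i)"
    unfolding U by (rule diff_card_le_card_Diff[OF fin])
  ultimately show ?thesis using c by (simp add: card_words)
qed

lemma V_bound:
  assumes "8 * (j + 1) \<le> 2 ^ k"
  shows "3 * 2 ^ j \<le> 4 * card (Vs k j)"
proof -
  define B2 where "B2 = {u \<in> words j. sublist (replicate k True) u}"
  have U: "Vs k j = words j - B2" by (auto simp: Vs_def B2_def)
  have fin: "finite B2" by (auto simp: B2_def intro: finite_subset[OF _ finite_words])
  have "4 * card B2 * 2 ^ k \<le> (8 * (j + 1)) * 2 ^ j"
    using card_B2[of j k] by (simp add: B2_def algebra_simps)
  also have "\<dots> \<le> 2 ^ k * 2 ^ j" using assms by simp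
  finally have "4 * card B2 \<le> 2 ^ j" by simp
  moreover have "card (words j) - card B2 \<le> card (Vs k j)"
    unfolding U by (rule diff_card_le_card_Diff[OF fin])
  ultimately show ?thesis by (simp add: card_words)
qed

lemma noR_Nil: "0 < k \<Longrightarrow> \<not> sublist (replicate k True) []"
  by simp

lemma noR_app: "\<not> sublist (replicate k True) a \<Longrightarrow> \<not> sublist (replicate k True) b \<Longrightarrow>
  \<not> sublist (replicate k True) (a @ False # b)"
  by (rule noR_split) auto

lemma noR_zeros: "\<not> sublist (replicate k True) b \<Longrightarrow> 0 < k \<Longrightarrow>
  \<not> sublist (replicate k True) (replicate m False @ b)"
proof (induction m)
  case 0 then show ?case by simp
next
  case (Suc m)
  then show ?case using noR_app[of k "[]" "replicate m False @ b"] by simp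
qed

lemma noR_True: "2 \<le> k \<Longrightarrow> \<not> sublist (replicate k True) [True]"
  by (auto dest: sublist_length_le)

lemma blk_len: "length (blk k u v) = length u + length v + k + 5"
  by (simp add: blk_def)

lemma blk_in_G:
  assumes k: "2 \<le> k" and u: "u \<in> Us k i" and v: "v \<in> Vs k j"
  shows "blk k u v \<in> Gs k (i + j + k + 5)"
proof -
  let ?R = "replicate k True"
  have nu: "\<not> sublist ?R u" and nv: "\<not> sublist ?R v" using u v by (auto simp: Us_def Vs_def)
  have k0: "0 < k" using k by simp
  have 1: "\<not> sublist ?R (v @ [False])" using noR_app[OF nv noR_Nil[OF k0]] by simp
  have 2: "\<not> sublist ?R (replicate k False @ v @ [False])" by (rule noR_zeros[OF 1 k0])
  have 3: "\<not> sublist ?R ([True] @ False # replicate k False @ v @ [False])"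
    by (rule noR_app[OF noR_True[OF k] 2])
  have 4: "\<not> sublist ?R (u @ False # True # replicate (Suc k) False @ v @ [False])"
    using noR_app[OF nu 3] by simp
  have 5: "\<not> sublist ?R ([] @ False # u @ False # True # replicate (Suc k) False @ v @ [False])"
    by (rule noR_app[OF noR_Nil[OF k0] 4])
  have "blk k u v = (False # u @ [False, True]) @ replicate (Suc k) False @ (v @ [False])"
    by (simp add: blk_def del: replicate_Suc)
  then have "sublist (replicate (Suc k) False) (blk k u v)"
    by (metis sublist_appendI)
  moreover have "length (blk k u v) = i + j + k + 5" using u v by (simp add: blk_len Us_def Vs_def words_def)
  ultimately show ?thesis using 5 by (simp add: Gs_def words_def blk_def)
qed



lemma blk_neq:
  assumes nP: "\<not> sublist (True # replicate (Suc k) False) (False # u' @ [False])"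
    and lt: "length u < length u'"
  shows "blk k u v \<noteq> blk k u' v'"
proof
  assume eq: "blk k u v = blk k u' v'"
  define x where "x = blk k u v"
  let ?P = "True # replicate (Suc k) False"
  have x1: "x = (False # u' @ [False]) @ (?P @ v' @ [False])"
    using eq by (simp add: x_def blk_def)
  have x2: "x = (False # u @ [False] @ ?P) @ (v @ [False])"
    by (simp add: x_def blk_def)
  have x3: "x = (False # u @ [False, True]) @ (replicate (Suc k) False @ v @ [False])"
    by (simp add: x_def blk_def del: replicate_Suc)
  show False
  proof (cases "length u + k + 4 \<le> length u' + 2")
    case True
    have "take (length u' + 2) x = False # u' @ [False]"
      using x1 by simp
    moreover have "prefix (False # u @ [False] @ ?P) (take (length u' + 2) x)"
    proof -
      have len: "length (False # u @ [False] @ ?P) \<le> length u' + 2" using True by simp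
      show ?thesis unfolding x2 take_append take_all[OF len] by (rule prefixI) simp
    qed
    moreover have "sublist ?P (False # u @ [False] @ ?P)"
      using sublist_append_leftI[of ?P "False # u @ [False]"] by simp
    ultimately have "sublist ?P (False # u' @ [False])"
      using prefix_imp_sublist sublist_order.order.trans by metis
    then show False using nP by simp
  next
    case False
    have "x ! (length u' + 2) = True" using x1 by (simp add: nth_append)
    moreover have "x ! (length u' + 2) = False"
      using x3 False lt by (simp add: nth_append del: replicate_Suc)
    ultimately show False by simp
  qed
qed

lemma blk_inj:
  assumes "u \<in> Us k i" "u' \<in> Us k i'" "blk k u v = blk k u' v'"
  shows "u = u' \<and> v = v'"
proof -
  have "length u = length u'"
  proof (rule ccontr)
    assume "length u \<noteq> length u'"
    then consider "length u < length u'" | "length u' < length u" by linarith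
    then show False
    proof cases
      case 1 then show ?thesis using blk_neq[of k u' u v v'] assms by (auto simp: Us_def)
    next
      case 2 then show ?thesis using blk_neq[of k u u' v' v] assms by (auto simp: Us_def)
    qed
  qed
  then show ?thesis using assms(3) by (simp add: blk_def)
qed



lemma UV_prod:
  assumes "8 * (i + 2) \<le> 2 ^ k" "8 * (j + 1) \<le> 2 ^ k"
  shows "2 ^ (i + j + 1) \<le> 4 * (card (Us k i) * card (Vs k j))"
proof -
  have a: "3 * 2 ^ i \<le> 4 * card (Us k i)" by (rule U_bound[OF assms(1)])
  have b: "3 * 2 ^ j \<le> 4 * card (Vs k j)" by (rule V_bound[OF assms(2)])
  have "(3 * 2 ^ i) * (3 * 2 ^ j) \<le> (4 * card (Us k i)) * (4 * card (Vs k j))"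
    by (rule mult_le_mono[OF a b])
  then have "9 * 2 ^ (i + j) \<le> 16 * (card (Us k i) * card (Vs k j))"
    by (simp add: power_add algebra_simps)
  then show ?thesis by (simp add: power_add)
qed

lemma G_bound:
  assumes k: "2 \<le> k" and L: "k + 5 \<le> L" and L8: "8 * L \<le> 2 ^ k"
  shows "(L - k - 4) * 2 ^ L \<le> card (Gs k L) * 2 ^ (k + 6)"
proof -
  define N where "N = L - k - 4"
  have LN: "L = N + k + 4" using L by (simp add: N_def)
  define S where "S = (SIGMA i:{..<N}. Us k i \<times> Vs k (N - 1 - i))"
  define h where "h = (\<lambda>(i::nat, (u, v)). blk k u v)"
  have finS: "finite S" unfolding S_def
    by (auto intro!: finite_SigmaI finite_cartesian_product intro: finite_subset[OF _ finite_words] simp: Us_def Vs_def)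
  have hS: "h ` S \<subseteq> Gs k L"
  proof
    fix x assume "x \<in> h ` S"
    then obtain i u v where i: "i < N" and u: "u \<in> Us k i" and v: "v \<in> Vs k (N - 1 - i)" and x: "x = blk k u v"
      by (auto simp: S_def h_def)
    have "x \<in> Gs k (i + (N - 1 - i) + k + 5)" using blk_in_G[OF k u v] x by simp
    moreover have "i + (N - 1 - i) + k + 5 = L" using i LN by simp
    ultimately show "x \<in> Gs k L" by simp
  qed
  have inj: "inj_on h S"
  proof (rule inj_onI)
    fix a b assume a: "a \<in> S" and b: "b \<in> S" and e: "h a = h b"
    obtain i u v where ai: "a = (i, u, v)" "u \<in> Us k i" using a by (auto simp: S_def)
    obtain i' u' v' where bi: "b = (i', u', v')" "u' \<in> Us k i'" using b by (auto simp: S_def)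
    have "u = u' \<and> v = v'" using blk_inj[OF ai(2) bi(2)] e ai bi by (simp add: h_def)
    moreover have "i = length u" "i' = length u'" using ai bi by (auto simp: Us_def words_def)
    ultimately show "a = b" using ai bi by simp
  qed
  have finG: "finite (Gs k L)" by (rule finite_subset[OF _ finite_words[of L]]) (auto simp: Gs_def)
  have cS: "card S \<le> card (Gs k L)"
    using card_image[OF inj] card_mono[OF finG hS] by simp
  have cS2: "card S = (\<Sum>i<N. card (Us k i) * card (Vs k (N - 1 - i)))"
    unfolding S_def
    by (subst card_SigmaI) (auto simp: card_cartesian_product intro: finite_subset[OF _ finite_words] simp: Us_def Vs_def)
  have "(\<Sum>i<N. 2 ^ N) \<le> (\<Sum>i<N. 4 * (card (Us k i) * card (Vs k (N - 1 - i))))"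
  proof (rule sum_mono)
    fix i assume i: "i \<in> {..<N}"
    have "2 ^ (i + (N - 1 - i) + 1) \<le> 4 * (card (Us k i) * card (Vs k (N - 1 - i)))"
      by (rule UV_prod) (use i L8 LN in auto)
    moreover have "i + (N - 1 - i) + 1 = N" using i by auto
    ultimately show "2 ^ N \<le> 4 * (card (Us k i) * card (Vs k (N - 1 - i)))" by simp
  qed
  then have "N * 2 ^ N \<le> 4 * card S" by (simp add: cS2 sum_distrib_left)
  also have "\<dots> \<le> 4 * card (Gs k L)" using cS by simp
  finally have "N * 2 ^ N * 2 ^ (k + 4) \<le> 4 * card (Gs k L) * 2 ^ (k + 4)" by simp
  moreover have "N * 2 ^ N * 2 ^ (k + 4) = N * 2 ^ L" by (simp add: LN power_add)
  moreover have "4 * card (Gs k L) * 2 ^ (k + 4) = card (Gs k L) * 2 ^ (k + 6)" by (simp add: power_add)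
  ultimately have "N * 2 ^ L \<le> card (Gs k L) * 2 ^ (k + 6)" by linarith
  then show ?thesis by (simp add: N_def)
qed



lemma len_concat_uniform: "(\<forall>x\<in>set xs. length x = g) \<Longrightarrow> length (concat xs) = length xs * g"
  by (induction xs) auto

lemma concat_inj_uniform:
  "length bs = length bs' \<Longrightarrow> (\<forall>x\<in>set bs. length x = g) \<Longrightarrow> (\<forall>x\<in>set bs'. length x = g) \<Longrightarrow>
   concat bs = concat bs' \<Longrightarrow> bs = bs'"
proof (induction bs arbitrary: bs')
  case Nil then show ?case by simp
next
  case (Cons b bs)
  then obtain b' bs'' where bs': "bs' = b' # bs''" by (cases bs') auto
  with Cons.prems have "b @ concat bs = b' @ concat bs''" "length b = length b'" by auto
  then have "b = b'" "concat bs = concat bs''" by auto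
  then show ?case using Cons bs' by auto
qed

lemma window_block:
  assumes "d \<le> length X" "length X + length B \<le> d + f"
  shows "sublist B (take f (drop d (X @ B @ Y)))"
proof -
  have "drop d (X @ B @ Y) = (drop d X @ B) @ Y" using assms(1) by simp
  moreover have "length (drop d X @ B) \<le> f" using assms by simp
  ultimately have "take f (drop d (X @ B @ Y)) = drop d X @ B @ take (f - length (drop d X @ B)) Y"
    by (simp only: take_append take_all) simp
  then show ?thesis by (simp only:) (rule sublist_appendI)
qed

lemma noR_concat:
  assumes "\<forall>b\<in>set bs. b \<noteq> [] \<and> last b = False \<and> \<not> sublist (replicate k True) b"
    and "\<not> sublist (replicate k True) t"
  shows "\<not> sublist (replicate k True) (concat bs @ t)"
  using assms(1)
proof (induction bs)
  case Nil then show ?case using assms(2) by simp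
next
  case (Cons b bs)
  have bn: "b \<noteq> []" "last b = False" using Cons.prems by auto
  have b: "b = butlast b @ [False]" using append_butlast_last_id[OF bn(1)] bn(2) by simp
  have nb: "\<not> sublist (replicate k True) b" using Cons.prems by simp
  have "\<not> sublist (replicate k True) (butlast b)"
  proof
    assume "sublist (replicate k True) (butlast b)"
    from sublist_order.order.trans[OF this sublist_butlast] nb show False by simp
  qed
  moreover have "\<not> sublist (replicate k True) (concat bs @ t)" using Cons.IH Cons.prems by simp
  ultimately have nr: "\<not> sublist (replicate k True) (butlast b @ False # (concat bs @ t))"
    by (rule noR_app)
  have e: "b @ (concat bs @ t) = butlast b @ False # (concat bs @ t)"
    using arg_cong[OF b, of "\<lambda>y. y @ (concat bs @ t)"] by simp
  have c: "concat (b # bs) @ t = butlast b @ False # (concat bs @ t)"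
    using e by simp
  show ?case unfolding c by (rule nr)
qed

definition Cd :: "nat \<Rightarrow> nat \<Rightarrow> nat \<Rightarrow> nat \<Rightarrow> bool list set" where
  "Cd k g m g2 = (\<lambda>(bs, t). replicate k True @ False # concat bs @ t) `
     ({bs. set bs \<subseteq> Gs k g \<and> length bs = m} \<times> Gs k g2)"

lemma G_props: "x \<in> Gs k L \<Longrightarrow> x \<noteq> [] \<and> last x = False \<and> \<not> sublist (replicate k True) x \<and> length x = L"
  by (auto simp: Gs_def words_def)

lemma Cd_card:
  assumes "finite (Gs k g)"
  shows "card (Cd k g m g2) = card (Gs k g) ^ m * card (Gs k g2)"
proof -
  let ?h = "\<lambda>(bs, t). replicate k True @ False # concat bs @ t"
  let ?D = "{bs. set bs \<subseteq> Gs k g \<and> length bs = m} \<times> Gs k g2"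
  have inj: "inj_on ?h ?D"
  proof (rule inj_onI)
    fix x y assume x: "x \<in> ?D" and y: "y \<in> ?D" and e: "?h x = ?h y"
    obtain bs t where xx: "x = (bs, t)" by (cases x)
    obtain bs' t' where yy: "y = (bs', t')" by (cases y)
    have l: "\<forall>z\<in>set bs. length z = g" "\<forall>z\<in>set bs'. length z = g" "length bs = m" "length bs' = m"
      using x y xx yy G_props by auto
    have e2: "concat bs @ t = concat bs' @ t'" using e xx yy by simp
    have "length (concat bs) = length (concat bs')" using len_concat_uniform[OF l(1)] len_concat_uniform[OF l(2)] l(3,4) by simp
    then have "concat bs = concat bs'" "t = t'" using e2 by auto
    then show "x = y" using concat_inj_uniform[of bs bs' g] l xx yy by simp
  qed
  have fin2: "finite (Gs k g2)" by (rule finite_subset[OF _ finite_words[of g2]]) (auto simp: Gs_def)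
  have "card (Cd k g m g2) = card ?D" unfolding Cd_def by (rule card_image[OF inj])
  also have "\<dots> = card (Gs k g) ^ m * card (Gs k g2)"
    by (simp add: card_cartesian_product card_lists_length_eq[OF assms])
  finally show ?thesis .
qed



lemma choose_j:
  fixes d k g m g2 f :: nat
  assumes "1 \<le> g" "1 \<le> m" "g2 + g \<le> f" "k + 1 + g \<le> f" "2 * g \<le> f + 1"
    "d + f \<le> k + 1 + m * g + g2"
  shows "\<exists>j<m. d \<le> k + 1 + j * g \<and> k + 1 + j * g + g \<le> d + f"
proof (cases "d \<le> k + 1")
  case True
  then show ?thesis using assms by (intro exI[of _ 0]) auto
next
  case False
  define a where "a = d - (k + 1)"
  define j where "j = (a + g - 1) div g"
  have a: "d = k + 1 + a" "0 < a" using False by (auto simp: a_def)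
  have j1: "j * g \<le> a + g - 1" unfolding j_def by (rule div_times_less_eq_dividend)
  have "(a + g - 1) = j * g + (a + g - 1) mod g" unfolding j_def by simp
  moreover have "(a + g - 1) mod g < g" using assms(1) by simp
  ultimately have j2: "a \<le> j * g" by linarith
  have "j * g < m * g" using j1 a assms by linarith
  then have "j < m" by simp
  moreover have "d \<le> k + 1 + j * g" using a j2 by simp
  moreover have "k + 1 + j * g + g \<le> d + f" using a j1 assms by linarith
  ultimately show ?thesis by blast
qed

lemma MU_of:
  assumes k: "0 < k"
    and H: "\<forall>w\<in>C. length w = n \<and> last w = False \<and>
      (\<exists>rest. w = replicate k True @ False # rest \<and> \<not> sublist (replicate k True) rest)"
  shows "MU n C"
  unfolding MU_def
proof (intro ballI allI impI notI)
  fix a b l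
  assume a: "a \<in> C" and b: "b \<in> C" and l: "1 \<le> l \<and> l < n" and eq: "take l a = drop (n - l) b"
  obtain ra where ra: "a = replicate k True @ False # ra" "length a = n" using H a by blast
  obtain rb where rb: "b = replicate k True @ False # rb" "\<not> sublist (replicate k True) rb"
    "length b = n" "last b = False" using H b by blast
  show False
  proof (cases "l \<le> k")
    case True
    have "take l a = replicate l True" using True by (simp add: ra(1))
    moreover have "last (drop (n - l) b) = False" using l rb(3,4) by simp
    ultimately show False using eq l by (metis last_replicate not_one_le_zero)
  next
    case False
    define d where "d = n - l"
    have d: "1 \<le> d" "d \<le> n - k - 1" using l False by (auto simp: d_def)
    have "take k (take l a) = replicate k True" using False by (simp add: ra(1))
    then have tk: "take k (drop d b) = replicate k True" using eq by (simp add: d_def)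
    show False
    proof (cases "d \<le> k")
      case True
      have db: "drop d b = replicate (k - d) True @ False # rb" using True by (simp add: rb(1))
      have "take k (drop d b) ! (k - d) = False" using d True by (simp add: db nth_append)
      moreover have "replicate k True ! (k - d) = True" using d k by simp
      ultimately show False using tk by simp
    next
      case False
      have "d - k = Suc (d - Suc k)" using False by simp
      then have db: "drop d b = drop (d - Suc k) rb" using False by (simp add: rb(1))
      have "sublist (take k (drop (d - Suc k) rb)) rb"
        using sublist_order.order.trans[OF sublist_take sublist_drop] by blast
      then show False using tk db rb(2) by simp
    qed
  qed
qed

lemma APD_of:
  assumes H: "\<forall>w\<in>C. length w = n \<and> \<not> sublist (replicate (Suc k) True) w \<and>
      (\<forall>d. d + f \<le> n \<longrightarrow> sublist (replicate (Suc k) False) (take f (drop d w)))"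
  shows "APD f n C"
  unfolding APD_def
proof (intro ballI allI impI)
  fix a b i j
  assume a: "a \<in> C" and b: "b \<in> C" and ij: "1 \<le> i \<and> i \<le> n + 1 - f \<and> 1 \<le> j \<and> j \<le> n + 1 - f"
  have "i - 1 + f \<le> n" using ij by linarith
  then have "sublist (replicate (Suc k) False) (subw a i f)" using H a by (simp add: subw_def)
  then have c: "sublist (replicate (Suc k) True) (compl_w (subw a i f))"
    using map_mono_sublist[of "replicate (Suc k) False" _ Not] by (simp add: compl_w_def)
  have nb: "\<not> sublist (replicate (Suc k) True) (subw b j f)"
  proof
    assume "sublist (replicate (Suc k) True) (subw b j f)"
    then have "sublist (replicate (Suc k) True) b"
      unfolding subw_def using sublist_order.order.trans[OF _ sublist_order.order.trans[OF sublist_take sublist_drop]]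
      by blast
    then show False using H b by blast
  qed
  show "compl_w (subw a i f) \<noteq> subw b j f \<and> compl_w (subw a i f) \<noteq> rev (subw b j f)"
  proof
    show "compl_w (subw a i f) \<noteq> subw b j f" using c nb by auto
    show "compl_w (subw a i f) \<noteq> rev (subw b j f)"
    proof
      assume "compl_w (subw a i f) = rev (subw b j f)"
      then have "sublist (replicate (Suc k) True) (rev (subw b j f))" using c by simp
      then have "sublist (rev (replicate (Suc k) True)) (subw b j f)" by (simp only: sublist_rev_right)
      then show False using nb by (simp only: rev_replicate)
    qed
  qed
qed



lemma MU_D: "MU n C \<Longrightarrow> a \<in> C \<Longrightarrow> b \<in> C \<Longrightarrow> 1 \<le> l \<Longrightarrow> l < n \<Longrightarrow> take l a \<noteq> drop (n - l) b"
  unfolding MU_def by auto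

lemma rot_le1:
  assumes mu: "MU n C" and w: "length w = n"
  shows "card {r \<in> {..<n}. rotate r w \<in> C} \<le> 1"
proof -
  have uniq: "\<forall>r1\<in>{r \<in> {..<n}. rotate r w \<in> C}. \<forall>r2\<in>{r \<in> {..<n}. rotate r w \<in> C}. r1 = r2"
  proof (intro ballI, rule ccontr)
    fix r1 r2 assume r1: "r1 \<in> {r \<in> {..<n}. rotate r w \<in> C}" and r2: "r2 \<in> {r \<in> {..<n}. rotate r w \<in> C}"
      and ne: "r1 \<noteq> r2"
    have key: "\<And>s1 s2. s1 < s2 \<Longrightarrow> s2 < n \<Longrightarrow> rotate s1 w \<in> C \<Longrightarrow> rotate s2 w \<in> C \<Longrightarrow> False"
    proof -
      fix s1 s2 assume s: "s1 < s2" "s2 < n" "rotate s1 w \<in> C" "rotate s2 w \<in> C"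
      define a where "a = rotate s1 w"
      define d where "d = s2 - s1"
      have la: "length a = n" using w by (simp add: a_def)
      have "rotate s2 w = rotate d a" using s by (simp add: a_def d_def rotate_rotate)
      also have "\<dots> = drop d a @ take d a" using s la by (simp add: rotate_drop_take d_def)
      finally have b: "rotate s2 w = drop d a @ take d a" .
      have "take (n - d) (rotate s2 w) = drop d a" using b la s by (simp add: d_def)
      moreover have "1 \<le> n - d \<and> n - d < n" using s by (auto simp: d_def)
      moreover have "take (n - d) (rotate s2 w) \<noteq> drop (n - (n - d)) a"
        unfolding a_def by (rule MU_D[OF mu s(4) s(3)]) (use \<open>1 \<le> n - d \<and> n - d < n\<close> in auto)
      moreover have "n - (n - d) = d" using s by (simp add: d_def)
      ultimately show False by simp
    qed
    show False
    proof (cases "r1 < r2")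
      case True then show ?thesis using key[of r1 r2] r1 r2 by simp
    next
      case False then have "r2 < r1" using ne by simp
      then show ?thesis using key[of r2 r1] r1 r2 by simp
    qed
  qed
  have fin: "finite {r \<in> {..<n}. rotate r w \<in> C}" by simp
  show ?thesis using iffD2[OF card_le_Suc0_iff_eq[OF fin] uniq] by simp
qed

lemma rot_count:
  assumes C: "C \<subseteq> words n" and r: "r < n"
  shows "card (words n \<inter> {w. rotate r w \<in> C}) = card C"
proof -
  have inv: "\<And>x. length x = n \<Longrightarrow> rotate (n - r) (rotate r x) = x"
    "\<And>x. length x = n \<Longrightarrow> rotate r (rotate (n - r) x) = x"
    using r by (simp_all add: rotate_rotate)
  have "bij_betw (rotate r) (words n \<inter> {w. rotate r w \<in> C}) C"
  proof (rule bij_betw_imageI)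
    show "inj_on (rotate r) (words n \<inter> {w. rotate r w \<in> C})"
    proof (rule inj_onI)
      fix x y assume x: "x \<in> words n \<inter> {w. rotate r w \<in> C}" and y: "y \<in> words n \<inter> {w. rotate r w \<in> C}"
        and e: "rotate r x = rotate r y"
      have "x = rotate (n - r) (rotate r x)" using x inv(1)[of x] by (simp add: words_def)
      also have "\<dots> = rotate (n - r) (rotate r y)" using e by simp
      also have "\<dots> = y" using y inv(1)[of y] by (simp add: words_def)
      finally show "x = y" .
    qed
    show "rotate r ` (words n \<inter> {w. rotate r w \<in> C}) = C"
    proof
      show "rotate r ` (words n \<inter> {w. rotate r w \<in> C}) \<subseteq> C" by auto
      show "C \<subseteq> rotate r ` (words n \<inter> {w. rotate r w \<in> C})"
      proof
        fix c assume c: "c \<in> C"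
        then have lc: "length c = n" using C by (auto simp: words_def)
        show "c \<in> rotate r ` (words n \<inter> {w. rotate r w \<in> C})"
        proof (rule image_eqI[of _ _ "rotate (n - r) c"])
          have e: "rotate r (rotate (n - r) c) = c" by (rule inv(2)[OF lc])
          show "c = rotate r (rotate (n - r) c)" using e by simp
          show "rotate (n - r) c \<in> words n \<inter> {w. rotate r w \<in> C}" using e c lc by (simp add: words_def)
        qed
      qed
    qed
  qed
  then show ?thesis by (rule bij_betw_same_card)
qed

lemma MU_upper:
  assumes C: "C \<subseteq> words n" and mu: "MU n C"
  shows "n * card C \<le> 2 ^ n"
proof -
  have "(\<Sum>w\<in>words n. \<Sum>r<n. of_bool (rotate r w \<in> C)) = (\<Sum>r<n. \<Sum>w\<in>words n. (of_bool (rotate r w \<in> C) :: nat))"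
    by (rule sum.swap)
  also have "\<dots> = (\<Sum>r<n. card C)"
    by (rule sum.cong) (simp_all add: finite_words rot_count[OF C])
  also have "\<dots> = n * card C" by simp
  finally have eq: "(\<Sum>w\<in>words n. \<Sum>r<n. (of_bool (rotate r w \<in> C) :: nat)) = n * card C" .
  have "(\<Sum>w\<in>words n. \<Sum>r<n. (of_bool (rotate r w \<in> C) :: nat)) \<le> (\<Sum>w\<in>words n. 1)"
  proof (rule sum_mono)
    fix w assume "w \<in> words n"
    then have "card {r \<in> {..<n}. rotate r w \<in> C} \<le> 1" by (intro rot_le1[OF mu]) (simp add: words_def)
    moreover have "{..<n} \<inter> {r. rotate r w \<in> C} = {r \<in> {..<n}. rotate r w \<in> C}" by auto
    ultimately show "(\<Sum>r<n. (of_bool (rotate r w \<in> C) :: nat)) \<le> 1" by simp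
  qed
  also have "\<dots> = 2 ^ n" by (simp add: card_words)
  finally show ?thesis using eq by simp
qed



lemma Cd_elem:
  assumes "w \<in> Cd k g m g2"
  obtains bs t where "w = replicate k True @ False # concat bs @ t" "set bs \<subseteq> Gs k g" "length bs = m" "t \<in> Gs k g2"
  using assms unfolding Cd_def by auto

lemma Cd_good:
  assumes k: "2 \<le> k" and g: "1 \<le> g" and m: "1 \<le> m" and c1: "g2 + g \<le> f" and c2: "k + 1 + g \<le> f"
    and c3: "2 * g \<le> f + 1" and n: "n = k + 1 + m * g + g2"
  shows "Cd k g m g2 \<subseteq> words n" "MU n (Cd k g m g2)" "APD f n (Cd k g m g2)"
proof -
  let ?R = "replicate k True"
  have props: "length w = n \<and> last w = False \<and> (\<exists>rest. w = ?R @ False # rest \<and> \<not> sublist ?R rest)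
      \<and> \<not> sublist (replicate (Suc k) True) w
      \<and> (\<forall>d. d + f \<le> n \<longrightarrow> sublist (replicate (Suc k) False) (take f (drop d w)))"
    if w: "w \<in> Cd k g m g2" for w
  proof -
    obtain bs t where wd: "w = ?R @ False # concat bs @ t" and bs: "set bs \<subseteq> Gs k g" "length bs = m"
      and t: "t \<in> Gs k g2" using Cd_elem[OF w] by blast
    have bsl: "\<forall>x\<in>set bs. length x = g" using bs G_props by blast
    have tp: "t \<noteq> [] \<and> last t = False \<and> \<not> sublist ?R t \<and> length t = g2" using G_props[OF t] .
    have len: "length w = n" using wd len_concat_uniform[OF bsl] bs tp n by simp
    have lst: "last w = False" using wd tp by simp
    have nr: "\<not> sublist ?R (concat bs @ t)"
      by (rule noR_concat) (use bs G_props tp in blast)+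
    have n1: "\<not> sublist (replicate (Suc k) True) w"
    proof -
      have "\<not> sublist (replicate (Suc k) True) ?R" by (auto dest: sublist_length_le)
      moreover have "\<not> sublist (replicate (Suc k) True) (concat bs @ t)"
      proof
        assume "sublist (replicate (Suc k) True) (concat bs @ t)"
        moreover have "sublist ?R (replicate (Suc k) True)"
          by (metis replicate_Suc replicate_append_same sublist_append_rightI)
        ultimately show False using nr sublist_order.order.trans by blast
      qed
      ultimately show ?thesis unfolding wd by (rule noR_split[rotated]) simp
    qed
    have win: "sublist (replicate (Suc k) False) (take f (drop d w))" if d: "d + f \<le> n" for d
    proof -
      obtain j where j: "j < m" "d \<le> k + 1 + j * g" "k + 1 + j * g + g \<le> d + f"
        using choose_j[OF g m c1 c2 c3, of d] d n by auto
      have jb: "j < length bs" using j bs by simp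
      have split: "bs = take j bs @ bs ! j # drop (Suc j) bs" by (rule id_take_nth_drop[OF jb])
      have w2: "w = (?R @ False # concat (take j bs)) @ bs ! j @ (concat (drop (Suc j) bs) @ t)"
        using arg_cong[OF split, of concat] wd by simp
      have lX: "length (?R @ False # concat (take j bs)) = k + 1 + j * g"
      proof -
        have "\<forall>x\<in>set (take j bs). length x = g" using bsl by (meson in_set_takeD)
        from len_concat_uniform[OF this] show ?thesis using jb by simp
      qed
      have bj: "bs ! j \<in> Gs k g" using bs jb by (meson nth_mem subsetD)
      have lb: "length (bs ! j) = g" using G_props[OF bj] by simp
      have "sublist (bs ! j) (take f (drop d w))"
        unfolding w2 by (rule window_block) (use lX lb j in auto)
      moreover have "sublist (replicate (Suc k) False) (bs ! j)" using bj by (simp add: Gs_def)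
      ultimately show ?thesis using sublist_order.order.trans by blast
    qed
    show ?thesis using len lst wd nr n1 win by blast
  qed
  show "Cd k g m g2 \<subseteq> words n" using props by (auto simp: words_def)
  show "MU n (Cd k g m g2)"
  proof (rule MU_of)
    show "0 < k" using k by simp
    show "\<forall>w\<in>Cd k g m g2. length w = n \<and> last w = False \<and>
      (\<exists>rest. w = replicate k True @ False # rest \<and> \<not> sublist (replicate k True) rest)"
      using props by blast
  qed
  show "APD f n (Cd k g m g2)" by (rule APD_of) (use props in blast)
qed



lemma S_finite: "finite {card C | C. C \<subseteq> words n \<and> MU n C \<and> APD f n C}"
proof -
  have "{card C | C. C \<subseteq> words n \<and> MU n C \<and> APD f n C} \<subseteq> card ` Pow (words n)" by auto
  then show ?thesis by (rule finite_subset) (simp add: finite_words)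
qed

lemma A_ge: "C \<subseteq> words n \<Longrightarrow> MU n C \<Longrightarrow> APD f n C \<Longrightarrow> card C \<le> A_APD_MU f n"
  unfolding A_APD_MU_def by (rule Max_ge[OF S_finite]) blast

lemma A_le: "n * A_APD_MU f n \<le> 2 ^ n"
proof -
  have ne: "{card C | C. C \<subseteq> words n \<and> MU n C \<and> APD f n C} \<noteq> {}"
  proof -
    have "MU n {}" "APD f n {}" by (simp_all add: MU_def APD_def)
    then show ?thesis by blast
  qed
  have "A_APD_MU f n \<in> {card C | C. C \<subseteq> words n \<and> MU n C \<and> APD f n C}"
    unfolding A_APD_MU_def by (rule Max_in[OF S_finite ne])
  then obtain C where "A_APD_MU f n = card C" "C \<subseteq> words n" "MU n C" by blast
  then show ?thesis using MU_upper by simp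
qed

lemma exists_k:
  assumes "1 \<le> (n::nat)"
  shows "\<exists>k. 8 * n \<le> 2 ^ k \<and> 2 ^ k < 16 * n"
proof -
  define k where "k = (LEAST k. 8 * n \<le> (2::nat) ^ k)"
  have "n < 2 ^ n" by (rule less_exp)
  then have "8 * n \<le> (2::nat) ^ (n + 3)" by (simp add: power_add)
  then have k1: "8 * n \<le> (2::nat) ^ k" unfolding k_def by (rule LeastI)
  have k0: "k \<noteq> 0" using k1 assms by (intro notI) simp
  have "\<not> 8 * n \<le> (2::nat) ^ (k - 1)" unfolding k_def
    by (rule not_less_Least) (use k0 in \<open>simp add: k_def\<close>)
  then have "2 * 2 ^ (k - 1) < 16 * n" by simp
  moreover have "2 * 2 ^ (k - 1) = (2::nat) ^ k" using k0 by (cases k) auto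
  ultimately show ?thesis using k1 by auto
qed

lemma sq_le_pow: "4 \<le> m \<Longrightarrow> m * m \<le> (2::nat) ^ m"
proof (induction m rule: nat_induct_at_least)
  case base then show ?case by simp
next
  case (Suc m)
  have h: "4 * m \<le> m * m" using Suc.hyps by (intro mult_le_mono1)
  have "Suc m * Suc m = m * m + 2 * m + 1" by simp
  then have "Suc m * Suc m \<le> 2 * (m * m)" using h Suc.hyps by linarith
  also have "\<dots> \<le> 2 * 2 ^ m" using Suc.IH by simp
  finally show ?case by simp
qed

lemma eventually_big: "\<exists>F. \<forall>f\<ge>F. 256 * p * f \<le> (2::nat) ^ (f div 6)"
proof (intro exI allI impI)
  fix f :: nat assume f: "6 * (2816 * p + 4) \<le> f"
  define m where "m = f div 6"
  have m: "2816 * p + 4 \<le> m" using div_le_mono[OF f, of 6] unfolding m_def by simp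
  have "f = 6 * m + f mod 6" unfolding m_def by simp
  moreover have "f mod 6 < 6" by simp
  ultimately have "f \<le> 6 * m + 5" by linarith
  then have "256 * p * f \<le> 256 * p * (11 * m)" using m by (intro mult_le_mono2) linarith
  also have "\<dots> = (2816 * p) * m" by simp
  also have "\<dots> \<le> m * m" using m by (intro mult_le_mono1) linarith
  also have "\<dots> \<le> 2 ^ m" using m by (intro sq_le_pow) linarith
  finally show "256 * p * f \<le> 2 ^ (f div 6)" by (simp add: m_def)
qed

lemma G_ge:
  assumes k: "2 \<le> k" and L: "2 * k + 8 \<le> L" and L8: "8 * L \<le> 2 ^ k" and kL: "2 ^ k \<le> 64 * p * L"
  shows "2 ^ L \<le> card (Gs k L) * (8192 * p)"
proof -
  have a: "(L - k - 4) * 2 ^ L \<le> card (Gs k L) * 2 ^ (k + 6)"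
    by (rule G_bound) (use k L L8 in auto)
  have "L * 2 ^ L \<le> (2 * (L - k - 4)) * 2 ^ L" using L by (intro mult_le_mono1) linarith
  also have "\<dots> \<le> 2 * (card (Gs k L) * 2 ^ (k + 6))" using a by simp
  also have "\<dots> = card (Gs k L) * 128 * 2 ^ k" by (simp add: power_add)
  also have "\<dots> \<le> card (Gs k L) * 128 * (64 * p * L)" using kL by (intro mult_le_mono2)
  also have "\<dots> = L * (card (Gs k L) * (8192 * p))" by simp
  finally have "L * 2 ^ L \<le> L * (card (Gs k L) * (8192 * p))" .
  then show ?thesis using L by simp
qed



lemma main_lower:
  fixes p f :: nat
  assumes p: "p > 0" and fF: "256 * p * f \<le> (2::nat) ^ (f div 6)" and f1: "1 \<le> f"
  shows "2 ^ (p * f) \<le> 32 * (p * f) * (8192 * p) ^ (4 * p) * A_APD_MU f (p * f)"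
proof -
  define n where "n = p * f"
  have n1: "1 \<le> n" "f \<le> n" using p f1 by (auto simp: n_def)
  obtain k where k: "8 * n \<le> 2 ^ k" "2 ^ k < 16 * n" using exists_k[OF n1(1)] by blast
  have "2 ^ (k + 4) < (2::nat) ^ (f div 6)"
  proof -
    have "(2::nat) ^ (k + 4) = 16 * 2 ^ k" by (simp add: power_add)
    also have "\<dots> < 256 * n" using k by simp
    also have "\<dots> \<le> 2 ^ (f div 6)" using fF by (simp add: n_def mult.assoc)
    finally show ?thesis .
  qed
  then have k6: "k + 4 < f div 6" by simp
  define g where "g = f div 3"
  have g3: "3 * g \<le> f" "f < 3 * g + 3" unfolding g_def by linarith+
  have "6 * (f div 6) \<le> f" by linarith
  then have gk: "2 * k + 8 \<le> g" using k6 g3 by linarith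
  have k2: "2 \<le> k"
  proof (rule ccontr)
    assume "\<not> 2 \<le> k"
    then have "(2::nat) ^ k \<le> 2 ^ 1" by (intro power_increasing) auto
    then show False using k(1) n1 by simp
  qed
  define N' where "N' = n - k - 1"
  define q where "q = N' div g"
  define e where "e = N' mod g"
  define m where "m = q - 1"
  define g2 where "g2 = g + e"
  have g1: "1 \<le> g" using gk by simp
  have N'q: "N' = q * g + e" unfolding q_def e_def by simp
  have eg: "e < g" unfolding e_def using g1 by simp
  have N'2: "2 * g \<le> N'" unfolding N'_def using g3 gk n1 by linarith
  have q2: "2 \<le> q"
  proof (rule ccontr)
    assume "\<not> 2 \<le> q"
    then have "q * g \<le> 1 * g" by (intro mult_le_mono1) linarith
    then show False using N'q N'2 eg by linarith
  qed
  have m1: "1 \<le> m" using q2 by (simp add: m_def)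
  have mq: "m * g + g = q * g" using q2 by (simp add: m_def algebra_simps)
  have nN: "N' + k + 1 = n" unfolding N'_def using g3 gk n1 by linarith
  have neq: "n = k + 1 + m * g + g2" unfolding g2_def using N'q mq nN by linarith
  have c1: "g2 + g \<le> f" using eg g3 by (simp add: g2_def)
  have c2: "k + 1 + g \<le> f" using gk g3 by linarith
  have c3: "2 * g \<le> f + 1" using g3 by linarith
  note good = Cd_good[OF k2 g1 m1 c1 c2 c3 neq]
  have finG: "finite (Gs k g)" by (rule finite_subset[OF _ finite_words[of g]]) (auto simp: Gs_def)
  have f4: "f \<le> 4 * g" using g3 gk by linarith
  have kg: "2 ^ k \<le> 64 * p * g"
  proof -
    have "16 * n \<le> 64 * p * g" using f4 by (simp add: n_def)
    then show ?thesis using k by linarith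
  qed
  have g2n: "g2 \<le> n" using neq by simp
  have "g \<le> m * g" using m1 by simp
  then have gn: "g \<le> n" using neq by linarith
  have Gg: "2 ^ g \<le> card (Gs k g) * (8192 * p)"
    by (rule G_ge[OF k2 gk]) (use k gn kg in auto)
  have Gg2: "2 ^ g2 \<le> card (Gs k g2) * (8192 * p)"
  proof (rule G_ge[OF k2])
    show "2 * k + 8 \<le> g2" using gk by (simp add: g2_def)
    show "8 * g2 \<le> 2 ^ k" using k g2n by linarith
    have "64 * p * g \<le> 64 * p * g2" by (simp add: g2_def)
    then show "2 ^ k \<le> 64 * p * g2" using kg by linarith
  qed
  define \<beta> where "\<beta> = 8192 * p"
  have "(2 ^ g) ^ m \<le> (card (Gs k g) * \<beta>) ^ m" unfolding \<beta>_def by (rule power_mono[OF Gg]) simp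
  then have A: "2 ^ (m * g) \<le> card (Gs k g) ^ m * \<beta> ^ m"
    by (simp add: power_mult[symmetric] power_mult_distrib mult.commute)
  have B: "2 ^ g2 \<le> card (Gs k g2) * \<beta>" using Gg2 by (simp add: \<beta>_def)
  have "(2::nat) ^ (m * g + g2) = 2 ^ (m * g) * 2 ^ g2" by (simp add: power_add)
  also have "\<dots> \<le> (card (Gs k g) ^ m * \<beta> ^ m) * (card (Gs k g2) * \<beta>)" by (rule mult_le_mono[OF A B])
  also have "\<dots> = card (Cd k g m g2) * \<beta> ^ (m + 1)" using Cd_card[OF finG] by (simp add: algebra_simps)
  finally have C: "2 ^ (m * g + g2) \<le> card (Cd k g m g2) * \<beta> ^ (m + 1)" .
  have "(m + 1) * g < 4 * p * g"
  proof -
    have "(m + 1) * g = q * g" using mq by (simp add: algebra_simps)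
    also have "\<dots> \<le> N'" using N'q by simp
    also have "\<dots> < n" using n1 by (simp add: N'_def)
    also have "\<dots> \<le> 4 * p * g" using f4 by (simp add: n_def)
    finally show ?thesis .
  qed
  then have "m + 1 < 4 * p" by (metis mult_less_cancel2)
  then have m4: "m + 1 \<le> 4 * p" by simp
  have b1: "1 \<le> \<beta>" using p by (simp add: \<beta>_def)
  have D: "\<beta> ^ (m + 1) \<le> \<beta> ^ (4 * p)" by (rule power_increasing[OF m4 b1])
  have "(2::nat) ^ n = 2 ^ (k + 1) * 2 ^ (m * g + g2)" using neq by (simp add: power_add[symmetric])
  also have "\<dots> \<le> (32 * n) * (card (Cd k g m g2) * \<beta> ^ (4 * p))"
  proof (rule mult_le_mono)
    show "2 ^ (k + 1) \<le> 32 * n" using k by simp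
    show "2 ^ (m * g + g2) \<le> card (Cd k g m g2) * \<beta> ^ (4 * p)"
      using C D by (meson le_trans mult_le_mono2)
  qed
  also have "\<dots> \<le> (32 * n) * (A_APD_MU f n * \<beta> ^ (4 * p))"
    using A_ge[OF good] by simp
  finally show ?thesis by (simp add: n_def \<beta>_def algebra_simps)
qed



theorem theorem7:
  fixes p :: nat
  assumes "p > 0"
  shows "\<exists>c3::real. c3 > 0 \<and> (\<exists>F. \<forall>f\<ge>F. even f \<longrightarrow>
           c3 * 2 ^ (p * f) / real (p * f) \<le> real (A_APD_MU f (p * f)) \<and>
           real (A_APD_MU f (p * f)) \<le> 2 ^ (p * f) / real (p * f))"
proof -
  define B :: nat where "B = (8192 * p) ^ (4 * p)"
  have B0: "0 < B" using assms by (simp add: B_def)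
  obtain F0 where F0: "\<forall>f\<ge>F0. 256 * p * f \<le> (2::nat) ^ (f div 6)" using eventually_big by blast
  show ?thesis
  proof (intro exI conjI allI impI)
    show "(0::real) < 1 / (32 * real B)" using B0 by simp
    fix f :: nat assume f: "max F0 1 \<le> f" and "even f"
    define n where "n = p * f"
    have n0: "0 < n" using assms f by (simp add: n_def)
    have low: "2 ^ n \<le> 32 * n * B * A_APD_MU f n"
      using main_lower[OF assms, of f] F0 f by (simp add: n_def B_def)
    then have low': "(2::real) ^ n \<le> 32 * real n * real B * real (A_APD_MU f n)"
      by (metis (mono_tags, opaque_lifting) of_nat_le_iff of_nat_mult of_nat_numeral of_nat_power)
    have "1 / (32 * real B) * 2 ^ n / real n = 2 ^ n / (32 * real n * real B)" by simp
    also have "\<dots> \<le> real (A_APD_MU f n)"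
      using low' n0 B0 by (simp add: divide_le_eq mult_ac)
    finally show "1 / (32 * real B) * 2 ^ (p * f) / real (p * f) \<le> real (A_APD_MU f (p * f))"
      by (simp add: n_def)
    have up: "n * A_APD_MU f n \<le> 2 ^ n" by (rule A_le)
    then have "real n * real (A_APD_MU f n) \<le> 2 ^ n"
      by (metis of_nat_le_iff of_nat_mult of_nat_numeral of_nat_power)
    then have "real (A_APD_MU f n) \<le> 2 ^ n / real n" using n0 by (simp add: le_divide_eq mult.commute)
    then show "real (A_APD_MU f (p * f)) \<le> 2 ^ (p * f) / real (p * f)" by (simp add: n_def)
  qed
qed

end
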